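(* Let $\mathcal S$ be a finite fundamental system and $G$ the elementary group generated by the elements of $\mathcal S$. Then $G$ is solvable, and its derived length is at most the cardinality of $\mathcal S$.
   Context: A homeomorphism $f$ of $[0,1]$ is simple if $[0,1]\setminus\mathrm{Fix}(f)$ has exactly one connected component; its closure is the support $S_f$ of $f$. It is positive if $f(x)\ge x$ for all $x$. A fundamental domain of a simple $f$ is a segment $[x,f(x)]$ with $x$ in the interior of $S_f$. A fundamental system is a family $\mathcal S$ of triples $(f,S_f,I_f)$ such that each $f$ is a simple positive homeomorphism of $[0,1]$, $S_f$ is its support and $I_f\subset S_f$ is a fundamental domain of $f$, and for any two distinct triples in $\mathcal S$: either $S_f$ and $S_g$ have disjoint interiors, or $S_f\subset I_g$, or $S_g\subset I_f$. An elementary group is a group generated by the elements $f$ of a fundamental system. The derived length of a solvable group $G$ is the least $k$ with $G_k=\{1\}$, where $G_1=[G,G]$ and $G_{j+1}=[G_j,G_j]$. *)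

theory Defs
  imports "HOL-Analysis.Analysis" "HOL-Algebra.Solvable_Groups" "HOL-Algebra.Bij"
begin

definition homeo01 :: "(real \<Rightarrow> real) \<Rightarrow> bool" where
  "homeo01 f \<longleftrightarrow> (\<exists>g. homeomorphism {0..1} {0..1} f g)"

definition Fix01 :: "(real \<Rightarrow> real) \<Rightarrow> real set" where
  "Fix01 f = {x \<in> {0..1}. f x = x}"

definition simple_homeo :: "(real \<Rightarrow> real) \<Rightarrow> bool" where
  "simple_homeo f \<longleftrightarrow> homeo01 f \<and> card (components ({0..1} - Fix01 f)) = 1"

definition supp01 :: "(real \<Rightarrow> real) \<Rightarrow> real set" where
  "supp01 f = closure ({0..1} - Fix01 f)"

definition positive_homeo :: "(real \<Rightarrow> real) \<Rightarrow> bool" where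
  "positive_homeo f \<longleftrightarrow> (\<forall>x\<in>{0..1}. x \<le> f x)"

definition fundamental_domain :: "(real \<Rightarrow> real) \<Rightarrow> real set \<Rightarrow> bool" where
  "fundamental_domain f I \<longleftrightarrow> (\<exists>x \<in> interior (supp01 f). I = {x .. f x})"

text \<open>A fundamental system: a set of pairs (f, I_f); the support S_f is determined by f.\<close>

definition fundamental_system :: "((real \<Rightarrow> real) \<times> real set) set \<Rightarrow> bool" where
  "fundamental_system \<S> \<longleftrightarrow>
     (\<forall>(f, I) \<in> \<S>. simple_homeo f \<and> positive_homeo f \<and> fundamental_domain f I) \<and>
     (\<forall>(f, I) \<in> \<S>. \<forall>(g, J) \<in> \<S>. (f, I) \<noteq> (g, J) \<longrightarrow>
        interior (supp01 f) \<inter> interior (supp01 g) = {} \<or> supp01 f \<subseteq> J \<or> supp01 g \<subseteq> I)"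

definition elementary_group :: "((real \<Rightarrow> real) \<times> real set) set \<Rightarrow> (real \<Rightarrow> real) monoid" where
  "elementary_group \<S> =
     (BijGroup {0..1}) \<lparr> carrier := generate (BijGroup {0..1}) ((\<lambda>(f, I). restrict f {0..1}) ` \<S>) \<rparr>"

end

theory Submission
  imports Defs
begin

context group begin

lemma cancel1: "x \<in> carrier G \<Longrightarrow> y \<in> carrier G \<Longrightarrow> inv x \<otimes> (x \<otimes> y) = y"
  using m_assoc[of "inv x" x y] by simp
lemma cancel2: "x \<in> carrier G \<Longrightarrow> y \<in> carrier G \<Longrightarrow> x \<otimes> (inv x \<otimes> y) = y"
  using m_assoc[of x "inv x" y] by simp

lemma conj_mult:
  assumes "g \<in> carrier G" "x \<in> carrier G" "y \<in> carrier G"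
  shows "g \<otimes> (x \<otimes> y) \<otimes> inv g = (g \<otimes> x \<otimes> inv g) \<otimes> (g \<otimes> y \<otimes> inv g)"
  using assms by (simp add: m_assoc inv_solve_left)

lemma conj_inv:
  assumes "g \<in> carrier G" "x \<in> carrier G"
  shows "g \<otimes> inv x \<otimes> inv g = inv (g \<otimes> x \<otimes> inv g)"
  using assms by (simp add: inv_mult_group m_assoc)

lemma comm_inv:
  assumes "x \<in> carrier G" "y \<in> carrier G"
  shows "inv (x \<otimes> y \<otimes> inv x \<otimes> inv y) = y \<otimes> x \<otimes> inv y \<otimes> inv x"
  using assms by (simp add: inv_mult_group m_assoc)

lemma commute_comm:
  assumes "x \<in> carrier G" "y \<in> carrier G" "x \<otimes> y = y \<otimes> x"
  shows "x \<otimes> y \<otimes> inv x \<otimes> inv y = \<one>"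
proof -
  have "x \<otimes> y \<otimes> inv x \<otimes> inv y = y \<otimes> x \<otimes> inv x \<otimes> inv y" using assms(3) by simp
  also have "\<dots> = \<one>" using assms(1,2) by (simp add: m_assoc)
  finally show ?thesis .
qed

lemma commute_conj:
  assumes "x \<in> carrier G" "y \<in> carrier G" "x \<otimes> y = y \<otimes> x"
  shows "x \<otimes> y \<otimes> inv x = y"
proof -
  have "x \<otimes> y \<otimes> inv x = y \<otimes> x \<otimes> inv x" using assms(3) by simp
  also have "\<dots> = y" using assms(1,2) by (simp add: m_assoc)
  finally show ?thesis .
qed

lemma conj_subgroup:
  assumes "subgroup K G" "s \<in> carrier G"
  shows "subgroup {l \<in> carrier G. s \<otimes> l \<otimes> inv s \<in> K} G"
proof (rule subgroupI)
  show "{l \<in> carrier G. s \<otimes> l \<otimes> inv s \<in> K} \<subseteq> carrier G" by auto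
  show "{l \<in> carrier G. s \<otimes> l \<otimes> inv s \<in> K} \<noteq> {}"
    using assms by (auto intro!: exI[of _ \<one>] simp: subgroup.one_closed)
  fix a assume "a \<in> {l \<in> carrier G. s \<otimes> l \<otimes> inv s \<in> K}"
  then show "inv a \<in> {l \<in> carrier G. s \<otimes> l \<otimes> inv s \<in> K}"
    using assms conj_inv[of s a] subgroup.m_inv_closed by fastforce
next
  fix a b assume "a \<in> {l \<in> carrier G. s \<otimes> l \<otimes> inv s \<in> K}" "b \<in> {l \<in> carrier G. s \<otimes> l \<otimes> inv s \<in> K}"
  then show "a \<otimes> b \<in> {l \<in> carrier G. s \<otimes> l \<otimes> inv s \<in> K}"
    using assms conj_mult[of s a b] subgroup.m_closed by fastforce
qed

lemma conj_generate:
  assumes "subgroup K G" "s \<in> carrier G" "Y \<subseteq> carrier G" "\<And>y. y \<in> Y \<Longrightarrow> s \<otimes> y \<otimes> inv s \<in> K"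
    "l \<in> generate G Y"
  shows "s \<otimes> l \<otimes> inv s \<in> K"
proof -
  have "generate G Y \<subseteq> {l \<in> carrier G. s \<otimes> l \<otimes> inv s \<in> K}"
    by (rule generate_subgroup_incl) (use assms conj_subgroup in auto)
  then show ?thesis using assms(5) by auto
qed

lemma NL:
  assumes "Y \<subseteq> carrier G" "Z \<subseteq> carrier G"
    "\<And>s y. s \<in> Z \<Longrightarrow> y \<in> Y \<Longrightarrow> s \<otimes> y \<otimes> inv s \<in> generate G Y"
    "\<And>s y. s \<in> Z \<Longrightarrow> y \<in> Y \<Longrightarrow> inv s \<otimes> y \<otimes> s \<in> generate G Y"
    "m \<in> generate G Z"
  shows "\<forall>l\<in>generate G Y. m \<otimes> l \<otimes> inv m \<in> generate G Y"
  using assms(5)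
proof (induction m rule: generate.induct)
  case one
  have "\<And>l. l \<in> generate G Y \<Longrightarrow> l \<in> carrier G" using generate_incl[OF assms(1)] by blast
  then show ?case by simp
next
  case (incl h)
  have hc: "h \<in> carrier G" using incl assms(2) by blast
  show ?case
  proof
    fix l assume "l \<in> generate G Y"
    then show "h \<otimes> l \<otimes> inv h \<in> generate G Y"
      using conj_generate[OF generate_is_subgroup[OF assms(1)] hc assms(1)] assms(3)[OF incl] by blast
  qed
next
  case (inv h)
  have hc: "inv h \<in> carrier G" using inv assms(2) by blast
  have hc': "h \<in> carrier G" using inv assms(2) by blast
  show ?case
  proof
    fix l assume "l \<in> generate G Y"
    then show "inv h \<otimes> l \<otimes> inv (inv h) \<in> generate G Y"
      using conj_generate[OF generate_is_subgroup[OF assms(1)] hc assms(1)] assms(4)[OF inv] hc'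
      by (simp add: inv_inv)
  qed
next
  case (eng h1 h2)
  have c: "h1 \<in> carrier G" "h2 \<in> carrier G"
    using eng.hyps generate_in_carrier assms(2) by blast+
  show ?case
  proof
    fix l assume l: "l \<in> generate G Y"
    then have lc: "l \<in> carrier G" using generate_in_carrier assms(1) by blast
    have "h1 \<otimes> h2 \<otimes> l \<otimes> inv (h1 \<otimes> h2) = h1 \<otimes> (h2 \<otimes> l \<otimes> inv h2) \<otimes> inv h1"
      using c lc by (simp add: m_assoc inv_mult_group)
    moreover have "h2 \<otimes> l \<otimes> inv h2 \<in> generate G Y" using eng.IH(2) l by blast
    ultimately show "h1 \<otimes> h2 \<otimes> l \<otimes> inv (h1 \<otimes> h2) \<in> generate G Y"
      using eng.IH(1) by simp
  qed
qed

lemma GL: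
  assumes "X \<subseteq> carrier G" "subgroup L G"
    "\<And>m l. m \<in> generate G X \<Longrightarrow> l \<in> L \<Longrightarrow> m \<otimes> l \<otimes> inv m \<in> L"
    "\<And>a b. a \<in> X \<Longrightarrow> b \<in> X \<Longrightarrow> a \<otimes> b \<otimes> inv a \<otimes> inv b \<in> L"
  shows "derived G (generate G X) \<subseteq> L"
proof -
  have gc: "\<And>x. x \<in> generate G X \<Longrightarrow> x \<in> carrier G" using generate_in_carrier assms(1) by auto
  have Lc: "\<And>x. x \<in> L \<Longrightarrow> x \<in> carrier G" using assms(2) subgroup.subset by auto
  have step1: "a \<otimes> y \<otimes> inv a \<otimes> inv y \<in> L" if a: "a \<in> X" and y: "y \<in> generate G X" for a y
    using y
  proof (induction y rule: generate.induct)
    case one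
    have "a \<in> carrier G" using a assms(1) by auto
    then show ?case using assms(2) subgroup.one_closed by simp
  next
    case (incl h)
    then show ?case using assms(4) a by auto
  next
    case (inv b)
    have ac: "a \<in> carrier G" "b \<in> carrier G" using a inv assms(1) by auto
    have eq: "a \<otimes> inv b \<otimes> inv a \<otimes> inv (inv b) = inv b \<otimes> (inv (a \<otimes> b \<otimes> inv a \<otimes> inv b)) \<otimes> inv (inv b)"
      using ac by (simp add: m_assoc inv_mult_group cancel1 cancel2)
    have "inv (a \<otimes> b \<otimes> inv a \<otimes> inv b) \<in> L"
      using assms(4)[OF a inv] subgroup.m_inv_closed[OF assms(2)] by blast
    moreover have "inv b \<in> generate G X" by (rule generate.inv[OF inv])
    ultimately have "inv b \<otimes> (inv (a \<otimes> b \<otimes> inv a \<otimes> inv b)) \<otimes> inv (inv b) \<in> L"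
      using assms(3) by blast
    then show ?case by (simp only: eq)
  next
    case (eng y1 y2)
    have ac: "a \<in> carrier G" "y1 \<in> carrier G" "y2 \<in> carrier G" using a eng.hyps assms(1) gc by auto
    have eq: "a \<otimes> (y1 \<otimes> y2) \<otimes> inv a \<otimes> inv (y1 \<otimes> y2) =
      (a \<otimes> y1 \<otimes> inv a \<otimes> inv y1) \<otimes> (y1 \<otimes> (a \<otimes> y2 \<otimes> inv a \<otimes> inv y2) \<otimes> inv y1)"
      using ac by (simp add: m_assoc inv_mult_group cancel1 cancel2)
    have "y1 \<otimes> (a \<otimes> y2 \<otimes> inv a \<otimes> inv y2) \<otimes> inv y1 \<in> L"
      using assms(3)[OF eng.hyps(1) eng.IH(2)] .
    then have "(a \<otimes> y1 \<otimes> inv a \<otimes> inv y1) \<otimes> (y1 \<otimes> (a \<otimes> y2 \<otimes> inv a \<otimes> inv y2) \<otimes> inv y1) \<in> L"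
      using subgroup.m_closed[OF assms(2) eng.IH(1)] by blast
    then show ?case by (simp only: eq)
  qed
  have step2: "x \<otimes> y \<otimes> inv x \<otimes> inv y \<in> L" if x: "x \<in> generate G X" and y: "y \<in> generate G X" for x y
    using x
  proof (induction x rule: generate.induct)
    case one
    have "y \<in> carrier G" using y gc by auto
    then show ?case using assms(2) subgroup.one_closed by simp
  next
    case (incl h)
    then show ?case using step1 y by auto
  next
    case (inv a)
    have ac: "a \<in> carrier G" "y \<in> carrier G" using y inv assms(1) gc by auto
    have eq: "inv a \<otimes> y \<otimes> inv (inv a) \<otimes> inv y = inv a \<otimes> (inv (a \<otimes> y \<otimes> inv a \<otimes> inv y)) \<otimes> inv (inv a)"
      using ac by (simp add: m_assoc inv_mult_group cancel1 cancel2)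
    have "inv (a \<otimes> y \<otimes> inv a \<otimes> inv y) \<in> L"
      using step1[OF inv y] subgroup.m_inv_closed[OF assms(2)] by blast
    moreover have "inv a \<in> generate G X" by (rule generate.inv[OF inv])
    ultimately have "inv a \<otimes> (inv (a \<otimes> y \<otimes> inv a \<otimes> inv y)) \<otimes> inv (inv a) \<in> L"
      using assms(3) by blast
    then show ?case by (simp only: eq)
  next
    case (eng x1 x2)
    have ac: "y \<in> carrier G" "x1 \<in> carrier G" "x2 \<in> carrier G" using y eng.hyps gc by auto
    have eq: "(x1 \<otimes> x2) \<otimes> y \<otimes> inv (x1 \<otimes> x2) \<otimes> inv y =
      (x1 \<otimes> (x2 \<otimes> y \<otimes> inv x2 \<otimes> inv y) \<otimes> inv x1) \<otimes> (x1 \<otimes> y \<otimes> inv x1 \<otimes> inv y)"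
      using ac by (simp add: m_assoc inv_mult_group cancel1 cancel2)
    have "x1 \<otimes> (x2 \<otimes> y \<otimes> inv x2 \<otimes> inv y) \<otimes> inv x1 \<in> L"
      using assms(3)[OF eng.hyps(1) eng.IH(2)] .
    then have "(x1 \<otimes> (x2 \<otimes> y \<otimes> inv x2 \<otimes> inv y) \<otimes> inv x1) \<otimes> (x1 \<otimes> y \<otimes> inv x1 \<otimes> inv y) \<in> L"
      using subgroup.m_closed[OF assms(2) _ eng.IH(1)] by blast
    then show ?case by (simp only: eq)
  qed
  show ?thesis unfolding derived_def
    by (rule generate_subgroup_incl) (use step2 assms(2) in blast)+
qed

end

definition cj :: "('a, 'b) monoid_scheme \<Rightarrow> 'a \<Rightarrow> 'a \<Rightarrow> 'a" where
  "cj G g x = g \<otimes>\<^bsub>G\<^esub> x \<otimes>\<^bsub>G\<^esub> inv\<^bsub>G\<^esub> g"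

context group begin

lemma cj_closed: "g \<in> carrier G \<Longrightarrow> x \<in> carrier G \<Longrightarrow> cj G g x \<in> carrier G"
  unfolding cj_def by simp

lemma cj_mult: "g \<in> carrier G \<Longrightarrow> x \<in> carrier G \<Longrightarrow> y \<in> carrier G \<Longrightarrow>
  cj G g (x \<otimes> y) = cj G g x \<otimes> cj G g y"
  unfolding cj_def using conj_mult by simp

lemma cj_inv: "g \<in> carrier G \<Longrightarrow> x \<in> carrier G \<Longrightarrow> cj G g (inv x) = inv (cj G g x)"
  unfolding cj_def using conj_inv by simp

lemma cj_cj: "g \<in> carrier G \<Longrightarrow> h \<in> carrier G \<Longrightarrow> x \<in> carrier G \<Longrightarrow>
  cj G g (cj G h x) = cj G (g \<otimes> h) x"
  unfolding cj_def by (simp add: m_assoc inv_mult_group)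

lemma cj_one1: "x \<in> carrier G \<Longrightarrow> cj G \<one> x = x"
  unfolding cj_def by simp

lemma cj_one2: "g \<in> carrier G \<Longrightarrow> cj G g \<one> = \<one>"
  unfolding cj_def by simp

lemma cj_conj: "g \<in> carrier G \<Longrightarrow> b \<in> carrier G \<Longrightarrow> d \<in> carrier G \<Longrightarrow>
  cj G g b \<otimes> cj G g d \<otimes> inv (cj G g b) = cj G g (b \<otimes> d \<otimes> inv b)"
  by (simp add: cj_mult cj_inv cj_closed)

lemma cj_comm: "g \<in> carrier G \<Longrightarrow> b \<in> carrier G \<Longrightarrow> d \<in> carrier G \<Longrightarrow>
  cj G g b \<otimes> cj G g d \<otimes> inv (cj G g b) \<otimes> inv (cj G g d) = cj G g (b \<otimes> d \<otimes> inv b \<otimes> inv d)"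
  by (simp add: cj_mult cj_inv cj_closed)

lemma der_normal:
  assumes "subgroup A G" "a \<in> A" "d \<in> derived G A"
  shows "a \<otimes> d \<otimes> inv a \<in> derived G A"
proof -
  interpret N: normal "derived G A" "G\<lparr>carrier := A\<rparr>"
    using derived_subgroup_is_normal[OF assms(1)] .
  have "a \<otimes>\<^bsub>G\<lparr>carrier := A\<rparr>\<^esub> d \<otimes>\<^bsub>G\<lparr>carrier := A\<rparr>\<^esub> inv\<^bsub>G\<lparr>carrier := A\<rparr>\<^esub> a \<in> derived G A"
    using N.inv_op_closed2[of a d] assms by simp
  then show ?thesis using m_inv_consistent[OF assms(1,2)] by simp
qed

lemma derived_sub:
  assumes "subgroup A G" shows "derived G A \<subseteq> A"
  using derived_incl[OF subset_refl assms] .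

lemma exp_derived_sub:
  assumes "subgroup A G" shows "(derived G ^^ j) A \<subseteq> A"
proof (induction j)
  case 0 then show ?case by simp
next
  case (Suc j)
  have "derived G ((derived G ^^ j) A) \<subseteq> (derived G ^^ j) A"
    using derived_sub[OF exp_of_derived_is_subgroup[OF assms]] .
  then show ?case using Suc by simp
qed

lemma comm_in_derived:
  assumes "a \<in> A" "b \<in> A" shows "a \<otimes> b \<otimes> inv a \<otimes> inv b \<in> derived G A"
  unfolding derived_def by (rule generate.incl) (use assms in blast)

lemma C2_alg:
  assumes sA: "subgroup A G" and sB: "subgroup B G" and gc: "\<gamma> \<in> carrier G"
    and c1: "\<And>a b n. a \<in> A \<Longrightarrow> b \<in> B \<Longrightarrow> a \<otimes> cj G (\<gamma> [^] (n::int)) b = cj G (\<gamma> [^] n) b \<otimes> a"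
    and c2: "\<And>b b' n m. b \<in> B \<Longrightarrow> b' \<in> B \<Longrightarrow> n \<noteq> m \<Longrightarrow>
       cj G (\<gamma> [^] (n::int)) b \<otimes> cj G (\<gamma> [^] m) b' = cj G (\<gamma> [^] m) b' \<otimes> cj G (\<gamma> [^] n) b"
  shows "derived G (generate G (A \<union> (\<Union>n. cj G (\<gamma> [^] (n::int)) ` B)))
     \<subseteq> generate G (derived G A \<union> (\<Union>n. cj G (\<gamma> [^] (n::int)) ` derived G B))"
proof -
  define X where "X = A \<union> (\<Union>n. cj G (\<gamma> [^] (n::int)) ` B)"
  define Y where "Y = derived G A \<union> (\<Union>n. cj G (\<gamma> [^] (n::int)) ` derived G B)"
  have Ac: "A \<subseteq> carrier G" using sA subgroup.subset by blast
  have Bc: "B \<subseteq> carrier G" using sB subgroup.subset by blast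
  have dA: "derived G A \<subseteq> A" using derived_sub[OF sA] .
  have dB: "derived G B \<subseteq> B" using derived_sub[OF sB] .
  have Xc: "X \<subseteq> carrier G" unfolding X_def using Ac Bc gc cj_closed by auto
  have Yc: "Y \<subseteq> carrier G" unfolding Y_def using Ac Bc dA dB gc cj_closed by fastforce
  have sL: "subgroup (generate G Y) G" using generate_is_subgroup[OF Yc] .
  have oneL: "\<one> \<in> generate G Y" by (rule generate.one)
  have conjX: "s \<otimes> y \<otimes> inv s \<in> generate G Y" if s: "s \<in> X" and y: "y \<in> Y" for s y
  proof -
    have yc: "y \<in> carrier G" using y Yc by blast
    have sc: "s \<in> carrier G" using s Xc by blast
    show ?thesis
    proof (cases "s \<in> A")
      case True
      show ?thesis
      proof (cases "y \<in> derived G A")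
        case True
        then have "s \<otimes> y \<otimes> inv s \<in> derived G A" using der_normal[OF sA \<open>s \<in> A\<close>] by blast
        then show ?thesis using generate.incl[of _ Y G] unfolding Y_def by blast
      next
        case False
        then obtain n d where d: "d \<in> derived G B" "y = cj G (\<gamma> [^] (n::int)) d"
          using y unfolding Y_def by blast
        have "s \<otimes> y = y \<otimes> s" using c1[OF True, of d n] d dB by blast
        then have "s \<otimes> y \<otimes> inv s = y" using commute_conj sc yc by blast
        then show ?thesis using generate.incl[OF y] by simp
      qed
    next
      case False
      then obtain n b where b: "b \<in> B" "s = cj G (\<gamma> [^] (n::int)) b" using s unfolding X_def by blast
      show ?thesis
      proof (cases "y \<in> derived G A")
        case True
        have "y \<otimes> s = s \<otimes> y" using c1[of y b n] True dA b by blast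
        then have "s \<otimes> y \<otimes> inv s = y" using commute_conj sc yc by metis
        then show ?thesis using generate.incl[OF y] by simp
      next
        case False
        then obtain m d where d: "d \<in> derived G B" "y = cj G (\<gamma> [^] (m::int)) d"
          using y unfolding Y_def by blast
        show ?thesis
        proof (cases "m = n")
          case True
          have "b \<otimes> d \<otimes> inv b \<in> derived G B" using der_normal[OF sB b(1) d(1)] .
          moreover have "s \<otimes> y \<otimes> inv s = cj G (\<gamma> [^] n) (b \<otimes> d \<otimes> inv b)"
            using cj_conj[of "\<gamma> [^] n" b d] b d True gc Bc dB by auto
          ultimately have "s \<otimes> y \<otimes> inv s \<in> Y" unfolding Y_def by blast
          then show ?thesis by (rule generate.incl)
        next
          case False
          have "s \<otimes> y = y \<otimes> s" using c2[of b d n m] b d dB False by auto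
          then have "s \<otimes> y \<otimes> inv s = y" using commute_conj sc yc by blast
          then show ?thesis using generate.incl[OF y] by simp
        qed
      qed
    qed
  qed
  have invX: "inv s \<in> X" if s: "s \<in> X" for s
  proof (cases "s \<in> A")
    case True then show ?thesis using subgroup.m_inv_closed[OF sA] unfolding X_def by blast
  next
    case False
    then obtain n b where b: "b \<in> B" "s = cj G (\<gamma> [^] (n::int)) b" using s unfolding X_def by blast
    then have "inv s = cj G (\<gamma> [^] n) (inv b)" using cj_inv gc Bc by auto
    moreover have "inv b \<in> B" using subgroup.m_inv_closed[OF sB b(1)] .
    ultimately show ?thesis unfolding X_def by blast
  qed
  have normal: "m \<otimes> l \<otimes> inv m \<in> generate G Y" if "m \<in> generate G X" "l \<in> generate G Y" for m l
  proof -
    have "\<forall>l\<in>generate G Y. m \<otimes> l \<otimes> inv m \<in> generate G Y"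
    proof (rule NL[OF Yc Xc])
      show "s \<otimes> y \<otimes> inv s \<in> generate G Y" if "s \<in> X" "y \<in> Y" for s y using conjX that by blast
      show "inv s \<otimes> y \<otimes> s \<in> generate G Y" if "s \<in> X" "y \<in> Y" for s y
        using conjX[OF invX[OF that(1)] that(2)] that(1) Xc by (simp add: subset_iff)
      show "m \<in> generate G X" using that(1) .
    qed
    then show ?thesis using that(2) by blast
  qed
  have comms: "a \<otimes> b \<otimes> inv a \<otimes> inv b \<in> generate G Y" if a: "a \<in> X" and b: "b \<in> X" for a b
  proof -
    have ac: "a \<in> carrier G" "b \<in> carrier G" using a b Xc by auto
    show ?thesis
    proof (cases "a \<in> A")
      case aA: True
      show ?thesis
      proof (cases "b \<in> A")
        case True
        then have "a \<otimes> b \<otimes> inv a \<otimes> inv b \<in> Y" using comm_in_derived[OF aA True] unfolding Y_def by blast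
        then show ?thesis by (rule generate.incl)
      next
        case False
        then obtain n d where d: "d \<in> B" "b = cj G (\<gamma> [^] (n::int)) d" using b unfolding X_def by blast
        have "a \<otimes> b = b \<otimes> a" using c1[OF aA d(1)] d by blast
        then show ?thesis using commute_comm ac oneL by simp
      qed
    next
      case aA: False
      then obtain n d where d: "d \<in> B" "a = cj G (\<gamma> [^] (n::int)) d" using a unfolding X_def by blast
      show ?thesis
      proof (cases "b \<in> A")
        case True
        have "b \<otimes> a = a \<otimes> b" using c1[OF True d(1)] d by blast
        then show ?thesis using commute_comm[OF ac] oneL by simp
      next
        case False
        then obtain m e where e: "e \<in> B" "b = cj G (\<gamma> [^] (m::int)) e" using b unfolding X_def by blast
        show ?thesis
        proof (cases "m = n")
          case True
          have "a \<otimes> b \<otimes> inv a \<otimes> inv b = cj G (\<gamma> [^] n) (d \<otimes> e \<otimes> inv d \<otimes> inv e)"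
            using cj_comm[of "\<gamma> [^] n" d e] d e True gc Bc by auto
          moreover have "d \<otimes> e \<otimes> inv d \<otimes> inv e \<in> derived G B" using comm_in_derived[OF d(1) e(1)] .
          ultimately have "a \<otimes> b \<otimes> inv a \<otimes> inv b \<in> Y" unfolding Y_def by blast
          then show ?thesis by (rule generate.incl)
        next
          case False
          have "a \<otimes> b = b \<otimes> a" using c2[of d e n m] d e False by auto
          then show ?thesis using commute_comm ac oneL by simp
        qed
      qed
    qed
  qed
  show ?thesis
    using GL[OF Xc sL normal comms] unfolding X_def Y_def by blast
qed

lemma C2_iter:
  assumes sA: "subgroup A G" and sB: "subgroup B G" and gc: "\<gamma> \<in> carrier G"
    and c1: "\<And>a b n. a \<in> A \<Longrightarrow> b \<in> B \<Longrightarrow> a \<otimes> cj G (\<gamma> [^] (n::int)) b = cj G (\<gamma> [^] n) b \<otimes> a"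
    and c2: "\<And>b b' n m. b \<in> B \<Longrightarrow> b' \<in> B \<Longrightarrow> n \<noteq> m \<Longrightarrow>
       cj G (\<gamma> [^] (n::int)) b \<otimes> cj G (\<gamma> [^] m) b' = cj G (\<gamma> [^] m) b' \<otimes> cj G (\<gamma> [^] n) b"
  shows "(derived G ^^ j) (generate G (A \<union> (\<Union>n. cj G (\<gamma> [^] (n::int)) ` B)))
     \<subseteq> generate G ((derived G ^^ j) A \<union> (\<Union>n. cj G (\<gamma> [^] (n::int)) ` (derived G ^^ j) B))"
proof (induction j)
  case 0
  have "A \<union> (\<Union>n. cj G (\<gamma> [^] (n::int)) ` B) \<subseteq> carrier G"
    using sA sB subgroup.subset gc cj_closed by fastforce
  then show ?case by simp
next
  case (Suc j)
  let ?Aj = "(derived G ^^ j) A" and ?Bj = "(derived G ^^ j) B"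
  have sAj: "subgroup ?Aj G" using exp_of_derived_is_subgroup[OF sA] .
  have sBj: "subgroup ?Bj G" using exp_of_derived_is_subgroup[OF sB] .
  have Aj: "?Aj \<subseteq> A" using exp_derived_sub[OF sA] .
  have Bj: "?Bj \<subseteq> B" using exp_derived_sub[OF sB] .
  have "(derived G ^^ Suc j) (generate G (A \<union> (\<Union>n. cj G (\<gamma> [^] (n::int)) ` B)))
     = derived G ((derived G ^^ j) (generate G (A \<union> (\<Union>n. cj G (\<gamma> [^] (n::int)) ` B))))" by simp
  also have "\<dots> \<subseteq> derived G (generate G (?Aj \<union> (\<Union>n. cj G (\<gamma> [^] (n::int)) ` ?Bj)))"
    using mono_derived[OF Suc.IH] .
  also have "\<dots> \<subseteq> generate G (derived G ?Aj \<union> (\<Union>n. cj G (\<gamma> [^] (n::int)) ` derived G ?Bj))"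
  proof (rule C2_alg[OF sAj sBj gc])
    show "a \<otimes> cj G (\<gamma> [^] (n::int)) b = cj G (\<gamma> [^] n) b \<otimes> a" if "a \<in> ?Aj" "b \<in> ?Bj" for a b n
      using c1 that Aj Bj by blast
    show "cj G (\<gamma> [^] (n::int)) b \<otimes> cj G (\<gamma> [^] m) b' = cj G (\<gamma> [^] m) b' \<otimes> cj G (\<gamma> [^] n) b"
      if "b \<in> ?Bj" "b' \<in> ?Bj" "n \<noteq> m" for b b' n m
      using c2 that Bj by blast
  qed
  finally show ?case by simp
qed

lemma C1_alg:
  assumes gc: "\<gamma> \<in> carrier G" and Xg: "Xg \<subseteq> carrier G" and Xr: "Xr \<subseteq> carrier G"
    and c: "\<And>u. u \<in> generate G Xr \<Longrightarrow> \<gamma> \<otimes> u = u \<otimes> \<gamma>"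
  shows "derived G (generate G (insert \<gamma> (Xg \<union> Xr)))
     \<subseteq> generate G (generate G Xr \<union> (\<Union>n. cj G (\<gamma> [^] (n::int)) ` generate G Xg))"
proof -
  define X where "X = insert \<gamma> (Xg \<union> Xr)"
  define Y where "Y = generate G Xr \<union> (\<Union>n. cj G (\<gamma> [^] (n::int)) ` generate G Xg)"
  have Hgc: "generate G Xg \<subseteq> carrier G" using generate_incl[OF Xg] .
  have Hrc: "generate G Xr \<subseteq> carrier G" using generate_incl[OF Xr] .
  have Xc: "X \<subseteq> carrier G" unfolding X_def using gc Xg Xr by auto
  have Yc: "Y \<subseteq> carrier G" unfolding Y_def using Hgc Hrc gc cj_closed by fastforce
  have sL: "subgroup (generate G Y) G" using generate_is_subgroup[OF Yc] .
  have oneL: "\<one> \<in> generate G Y" by (rule generate.one)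
  have HrL: "generate G Xr \<subseteq> generate G Y" using generate.incl[of _ Y G] unfolding Y_def by blast
  have HgL: "generate G Xg \<subseteq> generate G Y"
  proof
    fix h assume h: "h \<in> generate G Xg"
    then have e: "cj G (\<gamma> [^] (0::int)) h = h" using cj_one1 Hgc by auto
    have "h \<in> cj G (\<gamma> [^] (0::int)) ` generate G Xg" by (rule image_eqI[where f="cj G (\<gamma> [^] (0::int))", OF e[symmetric] h])
    then have "h \<in> Y" unfolding Y_def by blast
    then show "h \<in> generate G Y" by (rule generate.incl)
  qed
  have XL: "Xg \<union> Xr \<subseteq> generate G Y"
    using HgL HrL generate.incl[of _ Xg G] generate.incl[of _ Xr G] by blast
  have conjg: "cj G \<gamma> y \<in> generate G Y \<and> cj G (inv \<gamma>) y \<in> generate G Y" if y: "y \<in> Y" for y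
  proof (cases "y \<in> generate G Xr")
    case True
    have yc: "y \<in> carrier G" using True Hrc by blast
    have e1: "\<gamma> \<otimes> y = y \<otimes> \<gamma>" using c[OF True] .
    have "cj G \<gamma> y = y" unfolding cj_def using commute_conj[OF gc yc e1] .
    moreover have "cj G (inv \<gamma>) y = y"
    proof -
      have "inv \<gamma> \<otimes> y = inv \<gamma> \<otimes> (y \<otimes> \<gamma>) \<otimes> inv \<gamma>" using gc yc by (simp add: m_assoc)
      also have "\<dots> = inv \<gamma> \<otimes> (\<gamma> \<otimes> y) \<otimes> inv \<gamma>" using e1 by simp
      also have "\<dots> = y \<otimes> inv \<gamma>" using gc yc by (simp add: m_assoc cancel1)
      finally have "inv \<gamma> \<otimes> y = y \<otimes> inv \<gamma>" .
      then show ?thesis unfolding cj_def by (rule commute_conj[OF inv_closed[OF gc] yc])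
    qed
    ultimately show ?thesis using generate.incl[OF y] by simp
  next
    case False
    then obtain n h where h: "h \<in> generate G Xg" "y = cj G (\<gamma> [^] (n::int)) h" using y unfolding Y_def by blast
    have hc: "h \<in> carrier G" using h Hgc by blast
    have "cj G \<gamma> y = cj G (\<gamma> [^] (1 + n)) h"
      using h cj_cj[of \<gamma> "\<gamma> [^] n" h] gc hc int_pow_mult[OF gc, of 1 n] by simp
    moreover have "cj G (inv \<gamma>) y = cj G (\<gamma> [^] (-1 + n)) h"
      using h cj_cj[of "inv \<gamma>" "\<gamma> [^] n" h] gc hc int_pow_mult[OF gc, of "-1" n] int_pow_neg[OF gc, of 1]
      by simp
    ultimately show ?thesis using h(1) generate.incl[of _ Y G] unfolding Y_def by blast
  qed
  have conjX: "s \<otimes> y \<otimes> inv s \<in> generate G Y \<and> inv s \<otimes> y \<otimes> s \<in> generate G Y"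
    if s: "s \<in> X" and y: "y \<in> Y" for s y
  proof (cases "s = \<gamma>")
    case True
    then show ?thesis using conjg[OF y] gc unfolding cj_def by simp
  next
    case False
    then have sY: "s \<in> generate G Y" using s XL unfolding X_def by blast
    have yL: "y \<in> generate G Y" using y by (rule generate.incl)
    have isL: "inv s \<in> generate G Y" using subgroup.m_inv_closed[OF sL sY] .
    have "s \<otimes> y \<otimes> inv s \<in> generate G Y"
      using subgroup.m_closed[OF sL subgroup.m_closed[OF sL sY yL] isL] .
    moreover have "inv s \<otimes> y \<otimes> s \<in> generate G Y"
      using subgroup.m_closed[OF sL subgroup.m_closed[OF sL isL yL] sY] .
    ultimately show ?thesis by blast
  qed
  have normal: "m \<otimes> l \<otimes> inv m \<in> generate G Y" if "m \<in> generate G X" "l \<in> generate G Y" for m l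
  proof -
    have "\<forall>l\<in>generate G Y. m \<otimes> l \<otimes> inv m \<in> generate G Y"
      by (rule NL[OF Yc Xc]) (use conjX that(1) in blast)+
    then show ?thesis using that(2) by blast
  qed
  have comms: "a \<otimes> b \<otimes> inv a \<otimes> inv b \<in> generate G Y" if a: "a \<in> X" and b: "b \<in> X" for a b
  proof -
    have ac: "a \<in> carrier G" "b \<in> carrier G" using a b Xc by auto
    have gammaT: "\<gamma> \<otimes> t \<otimes> inv \<gamma> \<otimes> inv t \<in> generate G Y" if t: "t \<in> Xg \<union> Xr" for t
    proof (cases "t \<in> Xr")
      case True
      have tc: "t \<in> carrier G" using True Xr by blast
      have "\<gamma> \<otimes> t = t \<otimes> \<gamma>" using c[OF generate.incl[OF True]] .
      then show ?thesis using commute_comm[OF gc tc] oneL by simp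
    next
      case False
      then have tg: "t \<in> Xg" using t by blast
      have tc: "t \<in> carrier G" using tg Xg by blast
      have "cj G (\<gamma> [^] (1::int)) t \<in> Y" using generate.incl[OF tg] unfolding Y_def by blast
      then have "cj G \<gamma> t \<in> generate G Y" using gc generate.incl[of _ Y G] by simp
      moreover have "inv t \<in> generate G Y" using HgL generate.inv[OF tg] by blast
      ultimately have "cj G \<gamma> t \<otimes> inv t \<in> generate G Y" using subgroup.m_closed[OF sL] by blast
      then show ?thesis unfolding cj_def .
    qed
    show ?thesis
    proof (cases "a = \<gamma>")
      case True
      show ?thesis
      proof (cases "b = \<gamma>")
        case True then show ?thesis using \<open>a = \<gamma>\<close> commute_comm gc oneL by simp
      next
        case False then show ?thesis using gammaT b \<open>a = \<gamma>\<close> unfolding X_def by blast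
      qed
    next
      case aF: False
      show ?thesis
      proof (cases "b = \<gamma>")
        case True
        have "\<gamma> \<otimes> a \<otimes> inv \<gamma> \<otimes> inv a \<in> generate G Y" using gammaT a aF unfolding X_def by blast
        then have "inv (\<gamma> \<otimes> a \<otimes> inv \<gamma> \<otimes> inv a) \<in> generate G Y" using subgroup.m_inv_closed[OF sL] by blast
        then show ?thesis using comm_inv[OF gc ac(1)] True by simp
      next
        case False
        have "a \<in> generate G Y" "b \<in> generate G Y" using a b aF False XL unfolding X_def by blast+
        then show ?thesis using subgroup.m_closed[OF sL] subgroup.m_inv_closed[OF sL] by simp
      qed
    qed
  qed
  show ?thesis
    using GL[OF Xc sL normal comms] unfolding X_def Y_def by blast
qed

end

abbreviation BG :: "(real \<Rightarrow> real) monoid" where "BG \<equiv> BijGroup {0..1::real}"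

definition mov :: "(real \<Rightarrow> real) \<Rightarrow> real set" where
  "mov u = {x \<in> {0..1}. u x \<noteq> x}"

interpretation BGg: group BG by (rule group_BijGroup)

lemma BG_carrier: "carrier BG = Bij {0..1}" by (simp add: BijGroup_def)

lemma BG_mult_apply:
  "u \<in> carrier BG \<Longrightarrow> v \<in> carrier BG \<Longrightarrow> x \<in> {0..1} \<Longrightarrow> (u \<otimes>\<^bsub>BG\<^esub> v) x = u (v x)"
  by (simp add: BijGroup_def compose_def)

lemma BG_one_apply: "x \<in> {0..1} \<Longrightarrow> \<one>\<^bsub>BG\<^esub> x = x"
  by (simp add: BijGroup_def)

lemma BG_maps: "u \<in> carrier BG \<Longrightarrow> x \<in> {0..1} \<Longrightarrow> u x \<in> {0..1}"
  by (auto simp: BG_carrier Bij_def bij_betw_def)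

lemma BG_inj: "u \<in> carrier BG \<Longrightarrow> inj_on u {0..1}"
  by (auto simp: BG_carrier Bij_def bij_betw_def)

lemma BG_inv_apply:
  assumes "u \<in> carrier BG" "x \<in> {0..1::real}"
  shows "u ((inv\<^bsub>BG\<^esub> u) x) = x" "(inv\<^bsub>BG\<^esub> u) x \<in> {0..1}"
proof -
  have b: "bij_betw u {0..1} {0..1}" using assms(1) by (simp add: BG_carrier Bij_def)
  have i: "inv\<^bsub>BG\<^esub> u = (\<lambda>x\<in>{0..1}. inv_into {0..1} u x)"
    using inv_BijGroup assms(1) BG_carrier by simp
  show "u ((inv\<^bsub>BG\<^esub> u) x) = x" using i b assms(2)
    by (simp add: bij_betw_def f_inv_into_f)
  have "x \<in> u ` {0..1}" using b assms(2) by (simp add: bij_betw_def)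
  then have "inv_into {0..1} u x \<in> {0..1}" by (rule inv_into_into)
  then show "(inv\<^bsub>BG\<^esub> u) x \<in> {0..1}" using i assms(2) by simp
qed

lemma BG_eqI:
  assumes "u \<in> carrier BG" "v \<in> carrier BG" "\<And>x. x \<in> {0..1} \<Longrightarrow> u x = v x"
  shows "u = v"
proof -
  have "u \<in> extensional {0..1}" "v \<in> extensional {0..1}"
    using assms(1,2) by (auto simp: BG_carrier Bij_def)
  then show ?thesis using assms(3) by (rule extensionalityI)
qed

lemma mov_mult: "u \<in> carrier BG \<Longrightarrow> v \<in> carrier BG \<Longrightarrow> mov (u \<otimes>\<^bsub>BG\<^esub> v) \<subseteq> mov u \<union> mov v"
  unfolding mov_def using BG_mult_apply by fastforce

lemma mov_inv: assumes "u \<in> carrier BG" shows "mov (inv\<^bsub>BG\<^esub> u) \<subseteq> mov u"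
proof
  fix x assume x: "x \<in> mov (inv\<^bsub>BG\<^esub> u)"
  then have x0: "x \<in> {0..1}" and ne: "(inv\<^bsub>BG\<^esub> u) x \<noteq> x" by (auto simp: mov_def)
  have "u x \<noteq> x"
  proof
    assume "u x = x"
    then have "u ((inv\<^bsub>BG\<^esub> u) x) = u x" using BG_inv_apply(1)[OF assms x0] by simp
    then show False using inj_onD[OF BG_inj[OF assms]] BG_inv_apply(2)[OF assms x0] x0 ne by blast
  qed
  then show "x \<in> mov u" using x0 by (simp add: mov_def)
qed

lemma mov_one: "mov \<one>\<^bsub>BG\<^esub> = {}"
  unfolding mov_def using BG_one_apply by auto

lemma gen_mov:
  assumes "Y \<subseteq> carrier BG" "\<And>y. y \<in> Y \<Longrightarrow> mov y \<subseteq> W" "u \<in> generate BG Y"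
  shows "mov u \<subseteq> W"
  using assms(3)
proof (induction u rule: generate.induct)
  case one then show ?case by (simp add: mov_one)
next
  case (incl h) then show ?case using assms(2) by blast
next
  case (inv h) then show ?case using assms mov_inv[of h] by blast
next
  case (eng h1 h2)
  have "h1 \<in> carrier BG" "h2 \<in> carrier BG"
    using eng.hyps BGg.generate_in_carrier[OF assms(1)] by blast+
  then show ?case using mov_mult eng.IH by blast
qed

lemma mov_stable:
  assumes "u \<in> carrier BG" "x \<in> mov u" shows "u x \<in> mov u"
proof -
  have x0: "x \<in> {0..1}" "u x \<noteq> x" using assms(2) by (auto simp: mov_def)
  have "u (u x) \<noteq> u x"
    using inj_onD[OF BG_inj[OF assms(1)] _ BG_maps[OF assms(1) x0(1)] x0(1)] x0 by blast
  then show ?thesis using BG_maps[OF assms(1) x0(1)] by (simp add: mov_def)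
qed

lemma mov_commute:
  assumes "u \<in> carrier BG" "v \<in> carrier BG" "mov u \<inter> mov v = {}"
  shows "u \<otimes>\<^bsub>BG\<^esub> v = v \<otimes>\<^bsub>BG\<^esub> u"
proof (rule BG_eqI)
  show "u \<otimes>\<^bsub>BG\<^esub> v \<in> carrier BG" "v \<otimes>\<^bsub>BG\<^esub> u \<in> carrier BG" using assms by auto
  fix x assume x: "x \<in> {0..1::real}"
  show "(u \<otimes>\<^bsub>BG\<^esub> v) x = (v \<otimes>\<^bsub>BG\<^esub> u) x"
  proof (cases "x \<in> mov u")
    case True
    then have "v x = x" "u x \<in> mov u" using assms(3) mov_stable[OF assms(1)] x by (auto simp: mov_def)
    then have "v (u x) = u x" using assms(3) BG_maps[OF assms(1) x] by (auto simp: mov_def)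
    then show ?thesis using \<open>v x = x\<close> BG_mult_apply assms x by simp
  next
    case False
    then have ux: "u x = x" using x by (simp add: mov_def)
    show ?thesis
    proof (cases "x \<in> mov v")
      case True
      then have "v x \<in> mov v" using mov_stable[OF assms(2)] by blast
      then have "u (v x) = v x" using assms(3) BG_maps[OF assms(2) x] by (auto simp: mov_def)
      then show ?thesis using ux BG_mult_apply assms x by simp
    next
      case False
      then have "v x = x" using x by (simp add: mov_def)
      then show ?thesis using ux BG_mult_apply assms x by simp
    qed
  qed
qed

lemma mov_cj:
  assumes "w \<in> carrier BG" "u \<in> carrier BG"
  shows "mov (cj BG w u) \<subseteq> w ` mov u"
proof
  fix x assume x: "x \<in> mov (cj BG w u)"
  then have x0: "x \<in> {0..1}" by (simp add: mov_def)
  define y where "y = (inv\<^bsub>BG\<^esub> w) x"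
  have y0: "y \<in> {0..1}" "w y = x" using BG_inv_apply[OF assms(1) x0] y_def by auto
  have "cj BG w u x = w (u y)"
    unfolding cj_def y_def using assms x0 BG_mult_apply BG_inv_apply by simp
  then have "u y \<noteq> y" using x y0 by (auto simp: mov_def)
  then have "y \<in> mov u" using y0 by (simp add: mov_def)
  then show "x \<in> w ` mov u" using y0 by blast
qed

lemma mov_image_commute:
  assumes "w \<in> carrier BG" "g \<in> carrier BG" "w \<otimes>\<^bsub>BG\<^esub> g = g \<otimes>\<^bsub>BG\<^esub> w"
  shows "w ` mov g \<subseteq> mov g"
proof
  fix y assume "y \<in> w ` mov g"
  then obtain x where x: "x \<in> mov g" "y = w x" by blast
  have x0: "x \<in> {0..1}" "g x \<noteq> x" using x by (auto simp: mov_def)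
  have "(w \<otimes>\<^bsub>BG\<^esub> g) x = (g \<otimes>\<^bsub>BG\<^esub> w) x" using assms(3) by simp
  then have "g (w x) = w (g x)"
    using BG_mult_apply[OF assms(1,2) x0(1)] BG_mult_apply[OF assms(2,1) x0(1)] by simp
  also have "\<dots> \<noteq> w x"
    using inj_onD[OF BG_inj[OF assms(1)] _ BG_maps[OF assms(2) x0(1)] x0(1)] x0(2) by blast
  finally show "y \<in> mov g" using x BG_maps[OF assms(1) x0(1)] by (simp add: mov_def)
qed

lemma homeo_facts:
  assumes "homeo01 f" "positive_homeo f"
  shows "f 0 = 0" "f 1 = 1" "\<And>x. x \<in> {0..1} \<Longrightarrow> f x \<in> {0..1}" "inj_on f {0..1}"
        "continuous_on {0..1} f" "\<And>x y. x\<in>{0..1} \<Longrightarrow> y\<in>{0..1} \<Longrightarrow> x<y \<Longrightarrow> f x < f y"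
        "\<And>x. x\<in>{0..1} \<Longrightarrow> x \<le> f x"
proof -
  obtain g where h: "homeomorphism {0..1} {0..1} f g" using assms(1) homeo01_def by blast
  have fS: "f ` {0..1} = {0..1}" and gS: "g ` {0..1} = {0..1}" and gf: "\<And>x. x\<in>{0..1} \<Longrightarrow> g (f x) = x"
    and fg: "\<And>y. y\<in>{0..1} \<Longrightarrow> f (g y) = y" and cf: "continuous_on {0..1} f"
    using h unfolding homeomorphism_def by auto
  show pos: "\<And>x. x\<in>{0..1} \<Longrightarrow> x \<le> f x" using assms(2) positive_homeo_def by blast
  show maps: "\<And>x. x \<in> {0..1} \<Longrightarrow> f x \<in> {0..1}" using fS by blast
  show inj: "inj_on f {0..1}" by (rule inj_on_inverseI[of _ g]) (use gf in auto)
  show "continuous_on {0..1} f" by (rule cf)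
  show "f 1 = 1" using pos[of 1] maps[of 1] by auto
  have g0: "g 0 \<in> {0..1}" using gS by auto
  have "f (g 0) = 0" using fg by auto
  then have "g 0 = 0" using pos[OF g0] g0 by auto
  then show f0: "f 0 = 0" using fg[of 0] by auto
  show "f x < f y" if xy: "x\<in>{0..1}" "y\<in>{0..1}" "x<y" for x y
  proof (rule ccontr)
    assume "\<not> f x < f y"
    moreover have "f x \<noteq> f y" using inj_onD[OF inj] xy by force
    ultimately have lt: "f y < f x" by simp
    have fy0: "0 \<le> f y" using maps xy by auto
    have cx: "continuous_on {0..x} f" using continuous_on_subset[OF cf] xy by auto
    obtain z where z: "0 \<le> z" "z \<le> x" "f z = f y"
      using IVT'[of f 0 "f y" x, OF _ _ _ cx] f0 lt fy0 xy by auto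
    then have "z = y" using inj_onD[OF inj z(3)] xy by auto
    then show False using z xy by auto
  qed
qed

lemma gen_carrier: assumes "homeo01 f" "positive_homeo f" shows "restrict f {0..1} \<in> carrier BG"
proof -
  note hf = homeo_facts[OF assms]
  have "f ` {0..1} = {0..1}"
  proof
    show "f ` {0..1} \<subseteq> {0..(1::real)}" using hf(3) by blast
    show "{0..1} \<subseteq> f ` {0..(1::real)}"
      using assms(1) unfolding homeo01_def homeomorphism_def by blast
  qed
  then have "bij_betw f {0..1} {0..1}" using hf(4) by (simp add: bij_betw_def)
  then show ?thesis by (simp add: BG_carrier Bij_def)
qed

lemma gen_mov_eq: "mov (restrict f {0..1}) = {0..1} - Fix01 f"
  by (auto simp: mov_def Fix01_def)

lemma gen_mov_open:
  assumes "homeo01 f" "positive_homeo f" shows "open (mov (restrict f {0..1}))"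
proof -
  note hf = homeo_facts[OF assms]
  have eq: "mov (restrict f {0..1}) = (\<lambda>x. f x - x) -` (-{0}) \<inter> {0<..<1}"
    using hf(1,2) by (auto simp: mov_def less_le)
  have "continuous_on {0<..<1} (\<lambda>x. f x - x)"
    by (intro continuous_intros continuous_on_subset[OF hf(5)]) auto
  then have "open ((\<lambda>x. f x - x) -` (-{0}) \<inter> {0<..<1::real})"
    using continuous_on_open_vimage[of "{0<..<1::real}" "\<lambda>x. f x - x"] by auto
  then show ?thesis using eq by simp
qed

lemma supp_sub: "supp01 f \<subseteq> {0..1}"
  unfolding supp01_def using closure_mono[of "{0..1} - Fix01 f" "{0..1::real}"] by auto

lemma gen_mov_int:
  assumes "homeo01 f" "positive_homeo f" shows "mov (restrict f {0..1}) \<subseteq> interior (supp01 f)"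
proof -
  have "mov (restrict f {0..1}) \<subseteq> supp01 f" unfolding supp01_def gen_mov_eq by (rule closure_subset)
  then show ?thesis by (rule interior_maximal[OF _ gen_mov_open[OF assms]])
qed

lemma seg_mov:
  assumes "homeo01 f" "positive_homeo f" "y \<in> {0..1}"
  shows "{y<..<f y} \<subseteq> mov (restrict f {0..1})"
proof
  note hf = homeo_facts[OF assms(1,2)]
  fix z assume z: "z \<in> {y<..<f y}"
  have fy: "f y \<in> {0..1}" using hf(3) assms(3) by blast
  have z0: "z \<in> {0..1}" using z assms(3) fy by auto
  have "f z \<noteq> z"
  proof
    assume "f z = z"
    moreover have "f y < f z" using hf(6)[OF assms(3) z0] z by auto
    ultimately show False using z by auto
  qed
  then show "z \<in> mov (restrict f {0..1})" using z0 by (simp add: mov_def)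
qed

lemma fs_elem:
  assumes "fundamental_system S" "(f, J) \<in> S"
  shows "homeo01 f" "positive_homeo f" "\<exists>x\<in>interior (supp01 f). J = {x..f x}"
proof -
  have h: "\<forall>p\<in>S. (case p of (f, I) \<Rightarrow> simple_homeo f \<and> positive_homeo f \<and> fundamental_domain f I)"
    using assms(1) unfolding fundamental_system_def by (rule conjunct1)
  have "simple_homeo f \<and> positive_homeo f \<and> fundamental_domain f J" using bspec[OF h assms(2)] by simp
  then show "homeo01 f" "positive_homeo f" "\<exists>x\<in>interior (supp01 f). J = {x..f x}"
    unfolding simple_homeo_def fundamental_domain_def by simp_all
qed

lemma fs_pair:
  assumes "fundamental_system S" "(f, I) \<in> S" "(g, J) \<in> S" "(f, I) \<noteq> (g, J)"
  shows "interior (supp01 f) \<inter> interior (supp01 g) = {} \<or> supp01 f \<subseteq> J \<or> supp01 g \<subseteq> I"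
proof -
  have h: "\<forall>p\<in>S. (case p of (f, I) \<Rightarrow> \<forall>q\<in>S. (case q of (g, J) \<Rightarrow> (f, I) \<noteq> (g, J) \<longrightarrow>
        interior (supp01 f) \<inter> interior (supp01 g) = {} \<or> supp01 f \<subseteq> J \<or> supp01 g \<subseteq> I))"
    using assms(1) unfolding fundamental_system_def by (rule conjunct2)
  have "\<forall>q\<in>S. (case q of (g, J) \<Rightarrow> (f, I) \<noteq> (g, J) \<longrightarrow>
        interior (supp01 f) \<inter> interior (supp01 g) = {} \<or> supp01 f \<subseteq> J \<or> supp01 g \<subseteq> I)"
    using bspec[OF h assms(2)] by simp
  from bspec[OF this assms(3)] show ?thesis using assms(4) by simp
qed

lemma fs_subset: assumes "fundamental_system S" "T \<subseteq> S" shows "fundamental_system T"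
proof -
  have h1: "\<forall>p\<in>S. (case p of (f, I) \<Rightarrow> simple_homeo f \<and> positive_homeo f \<and> fundamental_domain f I)"
    using assms(1) unfolding fundamental_system_def by (rule conjunct1)
  have h2: "\<forall>p\<in>S. (case p of (f, I) \<Rightarrow> \<forall>q\<in>S. (case q of (g, J) \<Rightarrow> (f, I) \<noteq> (g, J) \<longrightarrow>
        interior (supp01 f) \<inter> interior (supp01 g) = {} \<or> supp01 f \<subseteq> J \<or> supp01 g \<subseteq> I))"
    using assms(1) unfolding fundamental_system_def by (rule conjunct2)
  have "\<forall>p\<in>T. (case p of (f, I) \<Rightarrow> simple_homeo f \<and> positive_homeo f \<and> fundamental_domain f I)"
  proof
    fix p assume "p \<in> T"
    then have "p \<in> S" using assms(2) by blast
    then show "case p of (f, I) \<Rightarrow> simple_homeo f \<and> positive_homeo f \<and> fundamental_domain f I"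
      by (rule bspec[OF h1])
  qed
  moreover have "\<forall>p\<in>T. (case p of (f, I) \<Rightarrow> \<forall>q\<in>T. (case q of (g, J) \<Rightarrow> (f, I) \<noteq> (g, J) \<longrightarrow>
        interior (supp01 f) \<inter> interior (supp01 g) = {} \<or> supp01 f \<subseteq> J \<or> supp01 g \<subseteq> I))"
  proof
    fix p assume p: "p \<in> T"
    obtain f I where fI: "p = (f, I)" by (cases p)
    have "\<forall>q\<in>S. (case q of (g, J) \<Rightarrow> (f, I) \<noteq> (g, J) \<longrightarrow>
        interior (supp01 f) \<inter> interior (supp01 g) = {} \<or> supp01 f \<subseteq> J \<or> supp01 g \<subseteq> I)"
      using bspec[OF h2, of p] p assms(2) fI by auto
    then show "case p of (f, I) \<Rightarrow> \<forall>q\<in>T. (case q of (g, J) \<Rightarrow> (f, I) \<noteq> (g, J) \<longrightarrow>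
        interior (supp01 f) \<inter> interior (supp01 g) = {} \<or> supp01 f \<subseteq> J \<or> supp01 g \<subseteq> I)"
      using fI assms(2) by auto
  qed
  ultimately show ?thesis unfolding fundamental_system_def by (rule conjI)
qed

lemma J_sub_supp:
  assumes "homeo01 h" "positive_homeo h" "y \<in> interior (supp01 h)"
  shows "{y..h y} \<subseteq> supp01 h"
proof
  fix z assume z: "z \<in> {y..h y}"
  have ys: "y \<in> supp01 h" using assms(3) interior_subset by blast
  have y0: "y \<in> {0..1}" using ys supp_sub by blast
  have ms: "mov (restrict h {0..1}) \<subseteq> supp01 h"
    using closure_subset unfolding supp01_def gen_mov_eq by blast
  show "z \<in> supp01 h"
  proof (cases "z = y \<or> z = h y")
    case True
    show ?thesis
    proof (cases "h y = y")
      case True then show ?thesis using \<open>z = y \<or> z = h y\<close> ys by auto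
    next
      case False
      then have "y \<in> mov (restrict h {0..1})" using y0 by (simp add: mov_def)
      then have "restrict h {0..1} y \<in> mov (restrict h {0..1})"
        using mov_stable gen_carrier[OF assms(1,2)] by blast
      then have "h y \<in> mov (restrict h {0..1})" using y0 by simp
      then show ?thesis using \<open>z = y \<or> z = h y\<close> ys ms by auto
    qed
  next
    case False
    then have "z \<in> {y<..<h y}" using z by auto
    then show ?thesis using seg_mov[OF assms(1,2) y0] ms by blast
  qed
qed

lemma root_exists:
  assumes "finite S" "S \<noteq> {}" "fundamental_system S"
  shows "\<exists>g I. (g, I) \<in> S \<and> (\<forall>h J. (h, J) \<in> S \<longrightarrow> \<not> supp01 g \<subseteq> J)"
proof -
  define A where "A = (\<lambda>p. supp01 (fst p)) ` S"
  have fA: "finite A" using assms(1) A_def by simp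
  have nA: "A \<noteq> {}" using assms(2) A_def by simp
  obtain m where m: "m \<in> A" "\<forall>b\<in>A. m \<le> b \<longrightarrow> m = b"
    using finite_has_maximal[OF fA nA] by blast
  obtain p where p: "p \<in> S" "m = supp01 (fst p)" using m(1) A_def by blast
  obtain g I where pgI: "p = (g, I)" by (cases p)
  have gI: "(g, I) \<in> S" "m = supp01 g" using p pgI by auto
  have "\<not> supp01 g \<subseteq> J" if hJ: "(h, J) \<in> S" for h J
  proof
    assume sub: "supp01 g \<subseteq> J"
    obtain y where y: "y \<in> interior (supp01 h)" "J = {y..h y}" using fs_elem(3)[OF assms(3) hJ] by blast
    have "J \<subseteq> supp01 h" using J_sub_supp[OF fs_elem(1,2)[OF assms(3) hJ] y(1)] y(2) by simp
    then have le: "supp01 g \<subseteq> supp01 h" using sub by (rule order_trans[rotated])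
    have "supp01 h = supp01 (fst (h, J))" by simp
    then have hA: "supp01 h \<in> A" unfolding A_def using hJ by (rule image_eqI)
    have "supp01 g = supp01 h" using m(2) hA le gI(2) by blast
    then have "supp01 h \<subseteq> {y..h y}" using sub y(2) by simp
    then have "interior (supp01 h) \<subseteq> interior {y..h y}" by (rule interior_mono)
    then have "interior (supp01 h) \<subseteq> {y<..<h y}" by simp
    then show False using y(1) by auto
  qed
  then show ?thesis using gI by blast
qed

lemma pow_ge:
  assumes "\<gamma> \<in> carrier BG" "\<forall>z\<in>{0..1}. z \<le> \<gamma> z" "z \<in> {0..1}"
  shows "z \<le> (\<gamma> [^]\<^bsub>BG\<^esub> (n::nat)) z"
  using assms(3)
proof (induction n arbitrary: z)
  case 0 then show ?case by (simp add: BG_one_apply)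
next
  case (Suc n)
  have "(\<gamma> [^]\<^bsub>BG\<^esub> Suc n) z = (\<gamma> [^]\<^bsub>BG\<^esub> n) (\<gamma> z)"
    using BG_mult_apply[OF BGg.nat_pow_closed[OF assms(1)] assms(1) Suc.prems] by simp
  moreover have "\<gamma> z \<le> (\<gamma> [^]\<^bsub>BG\<^esub> n) (\<gamma> z)" using Suc.IH BG_maps[OF assms(1) Suc.prems] by blast
  ultimately show ?case using assms(2) Suc.prems by fastforce
qed

lemma pow_ge1:
  assumes "\<gamma> \<in> carrier BG" "\<forall>z\<in>{0..1}. z \<le> \<gamma> z" "z \<in> {0..1}"
  shows "\<gamma> z \<le> (\<gamma> [^]\<^bsub>BG\<^esub> (Suc n)) z"
proof -
  have "(\<gamma> [^]\<^bsub>BG\<^esub> Suc n) z = (\<gamma> [^]\<^bsub>BG\<^esub> n) (\<gamma> z)"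
    using BG_mult_apply[OF BGg.nat_pow_closed[OF assms(1)] assms(1) assms(3)] by simp
  then show ?thesis using pow_ge[OF assms(1,2) BG_maps[OF assms(1,3)]] by simp
qed

lemma pow_disj_lt:
  assumes gc: "\<gamma> \<in> carrier BG" and pos: "\<forall>z\<in>{0..1}. z \<le> \<gamma> z" and W: "W \<subseteq> {0..1}"
    and H: "\<forall>y\<in>W. \<forall>z\<in>{0..1}. \<gamma> y \<le> z \<longrightarrow> z \<notin> W"
    and nm: "(n::int) < m"
  shows "(\<gamma> [^]\<^bsub>BG\<^esub> n) ` W \<inter> (\<gamma> [^]\<^bsub>BG\<^esub> m) ` W = {}"
proof (rule ccontr)
  assume "(\<gamma> [^]\<^bsub>BG\<^esub> n) ` W \<inter> (\<gamma> [^]\<^bsub>BG\<^esub> m) ` W \<noteq> {}"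
  then obtain y y' where y: "y \<in> W" "y' \<in> W" and eq: "(\<gamma> [^]\<^bsub>BG\<^esub> n) y = (\<gamma> [^]\<^bsub>BG\<^esub> m) y'" by blast
  obtain j where j: "m = n + int (Suc j)" using nm by (metis add.commute less_imp_Suc_add of_nat_Suc zless_iff_Suc_zadd)
  have y0: "y \<in> {0..1}" "y' \<in> {0..1}" using y W by auto
  have pc: "\<gamma> [^]\<^bsub>BG\<^esub> (Suc j) \<in> carrier BG" using BGg.nat_pow_closed[OF gc] .
  have "\<gamma> [^]\<^bsub>BG\<^esub> m = \<gamma> [^]\<^bsub>BG\<^esub> n \<otimes>\<^bsub>BG\<^esub> \<gamma> [^]\<^bsub>BG\<^esub> (Suc j)"
    using BGg.int_pow_mult[OF gc, of n "int (Suc j)"] j by (simp add: int_pow_int del: of_nat_Suc)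
  then have "(\<gamma> [^]\<^bsub>BG\<^esub> m) y' = (\<gamma> [^]\<^bsub>BG\<^esub> n) ((\<gamma> [^]\<^bsub>BG\<^esub> (Suc j)) y')"
    using BG_mult_apply[OF BGg.int_pow_closed[OF gc] pc y0(2)] by simp
  then have "y = (\<gamma> [^]\<^bsub>BG\<^esub> (Suc j)) y'"
    using eq inj_onD[OF BG_inj[OF BGg.int_pow_closed[OF gc, of n]]] y0 BG_maps[OF pc y0(2)] by auto
  moreover have "\<gamma> y' \<le> (\<gamma> [^]\<^bsub>BG\<^esub> (Suc j)) y'" using pow_ge1[OF gc pos y0(2)] .
  ultimately show False using H y(2) y0(1) y(1) by blast
qed

lemma pow_disj:
  assumes gc: "\<gamma> \<in> carrier BG" and pos: "\<forall>z\<in>{0..1}. z \<le> \<gamma> z" and W: "W \<subseteq> {0..1}"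
    and H: "\<forall>y\<in>W. \<forall>z\<in>{0..1}. \<gamma> y \<le> z \<longrightarrow> z \<notin> W"
    and nm: "(n::int) \<noteq> m"
  shows "(\<gamma> [^]\<^bsub>BG\<^esub> n) ` W \<inter> (\<gamma> [^]\<^bsub>BG\<^esub> m) ` W = {}"
proof (cases "n < m")
  case True show ?thesis by (rule pow_disj_lt[OF assms(1-4) True])
next
  case False
  then have mn: "m < n" using nm by simp
  have "(\<gamma> [^]\<^bsub>BG\<^esub> m) ` W \<inter> (\<gamma> [^]\<^bsub>BG\<^esub> n) ` W = {}" by (rule pow_disj_lt[OF assms(1-4) mn])
  then show ?thesis by (simp add: Int_commute)
qed

definition gens :: "((real \<Rightarrow> real) \<times> real set) set \<Rightarrow> (real \<Rightarrow> real) set" where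
  "gens S = (\<lambda>(f, I). restrict f {0..1}) ` S"

lemma gens_carrier: "fundamental_system S \<Longrightarrow> gens S \<subseteq> carrier BG"
  unfolding gens_def using fs_elem gen_carrier by fastforce

lemma gens_mem: "t \<in> gens S \<Longrightarrow> \<exists>f J. (f, J) \<in> S \<and> t = restrict f {0..1}"
  unfolding gens_def by auto

lemma main_ind:
  assumes "finite S" "fundamental_system S"
  shows "(derived BG ^^ card S) (generate BG (gens S)) = {\<one>\<^bsub>BG\<^esub>}"
  using assms
proof (induction "card S" arbitrary: S rule: less_induct)
  case less
  show ?case
  proof (cases "S = {}")
    case True
    then show ?thesis by (simp add: gens_def BGg.generate_empty)
  next
    case False
    obtain g I where gI: "(g, I) \<in> S" and root: "\<And>h J. (h, J) \<in> S \<Longrightarrow> \<not> supp01 g \<subseteq> J"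
      using root_exists[OF less.prems(1) False less.prems(2)] by blast
    define T where "T = S - {(g, I)}"
    define Tg where "Tg = {p \<in> T. supp01 (fst p) \<subseteq> I}"
    define Tr where "Tr = {p \<in> T. \<not> supp01 (fst p) \<subseteq> I}"
    define \<gamma> where "\<gamma> = restrict g {0..1::real}"
    define Xg where "Xg = gens Tg"
    define Xr where "Xr = gens Tr"
    define Hg where "Hg = generate BG Xg"
    define Hr where "Hr = generate BG Xr"
    have fT1: "finite T" using less.prems(1) T_def by simp
    have TS: "T \<subseteq> S" using T_def by blast
    have fT2: "fundamental_system T" by (rule fs_subset[OF less.prems(2) TS])
    note fT = fT1 fT2
    have cT: "card T < card S" unfolding T_def by (rule card_Diff1_less[OF less.prems(1) gI])
    have cS: "card S = Suc (card T)" unfolding T_def by (rule card_Suc_Diff1[OF less.prems(1) gI, symmetric])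
    have IH: "(derived BG ^^ card T) (generate BG (gens T)) = {\<one>\<^bsub>BG\<^esub>}" using less.hyps[OF cT fT] .
    have hg: "homeo01 g" "positive_homeo g" using fs_elem[OF less.prems(2) gI] by auto
    obtain x0 where x0: "x0 \<in> interior (supp01 g)" "I = {x0..g x0}"
      using fs_elem(3)[OF less.prems(2) gI] by blast
    note hgf = homeo_facts[OF hg]
    have gc: "\<gamma> \<in> carrier BG" using gen_carrier[OF hg] \<gamma>_def by simp
    have x00: "x0 \<in> {0..1}" using x0(1) interior_subset supp_sub by blast
    define W where "W = {x0<..<g x0}"
    have Wmov: "W \<subseteq> mov \<gamma>" using seg_mov[OF hg x00] W_def \<gamma>_def by simp
    have W0: "W \<subseteq> {0..1}" using Wmov by (auto simp: mov_def)
    have posg: "\<forall>z\<in>{0..1}. z \<le> \<gamma> z" using hgf(7) \<gamma>_def by simp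
    have HW0: "z \<notin> W" if "y \<in> W" "z \<in> {0..1}" "\<gamma> y \<le> z" for y z
    proof -
      have "g x0 < g y" using hgf(6)[OF x00] that W0 W_def by auto
      then show ?thesis using that W0 \<gamma>_def W_def by auto
    qed
    have HW: "\<forall>y\<in>W. \<forall>z\<in>{0..1}. \<gamma> y \<le> z \<longrightarrow> z \<notin> W" using HW0 by blast
    have ST: "S = insert (g, I) (Tg \<union> Tr)" using gI T_def Tg_def Tr_def by auto
    have TT: "T = Tg \<union> Tr" using T_def Tg_def Tr_def by auto
    have gensS: "gens S = insert \<gamma> (Xg \<union> Xr)"
      unfolding Xg_def Xr_def gens_def \<gamma>_def by (subst ST) (simp add: image_Un)
    have gensT: "Xg \<union> Xr = gens T" unfolding Xg_def Xr_def gens_def TT by (simp add: image_Un)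
    have XT: "Xg \<subseteq> gens T" "Xr \<subseteq> gens T" using gensT by auto
    have XTc: "gens T \<subseteq> carrier BG" using gens_carrier[OF fT(2)] .
    have Xgc: "Xg \<subseteq> carrier BG" and Xrc: "Xr \<subseteq> carrier BG" using XT XTc by auto
    have movXg: "mov t \<subseteq> W" if tX: "t \<in> Xg" for t
    proof -
      obtain f J where fJ: "(f, J) \<in> Tg" "t = restrict f {0..1}"
        using gens_mem[of t Tg] tX Xg_def by blast
      have fJS: "(f, J) \<in> S" using fJ(1) Tg_def T_def by auto
      have "mov t \<subseteq> interior (supp01 f)"
        using gen_mov_int[OF fs_elem(1,2)[OF less.prems(2) fJS]] fJ(2) by simp
      also have "\<dots> \<subseteq> interior I" using fJ(1) Tg_def by (intro interior_mono) auto
      finally show ?thesis using x0(2) W_def by simp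
    qed
    have movXr: "mov r \<subseteq> {0..1} - mov \<gamma>" if rX: "r \<in> Xr" for r
    proof -
      obtain f J where fJ: "(f, J) \<in> Tr" "r = restrict f {0..1}"
        using gens_mem[of r Tr] rX Xr_def by blast
      have fJS: "(f, J) \<in> S" and ne: "(f, J) \<noteq> (g, I)" and ns: "\<not> supp01 f \<subseteq> I"
        using fJ(1) Tr_def T_def by auto
      have "interior (supp01 f) \<inter> interior (supp01 g) = {}"
        using fs_pair[OF less.prems(2) fJS gI ne] ns root[OF fJS] by blast
      moreover have "mov r \<subseteq> interior (supp01 f)"
        using gen_mov_int[OF fs_elem(1,2)[OF less.prems(2) fJS]] fJ(2) by simp
      moreover have "mov \<gamma> \<subseteq> interior (supp01 g)" using gen_mov_int[OF hg] \<gamma>_def by simp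
      ultimately show ?thesis by (auto simp: mov_def)
    qed
    have Hgc: "Hg \<subseteq> carrier BG" using BGg.generate_incl[OF Xgc] Hg_def by simp
    have Hrc: "Hr \<subseteq> carrier BG" using BGg.generate_incl[OF Xrc] Hr_def by simp
    have movHg: "mov u \<subseteq> W" if uH: "u \<in> Hg" for u
    proof -
      have uG: "u \<in> generate BG Xg" using uH Hg_def by simp
      show ?thesis by (rule gen_mov[OF Xgc _ uG]) (rule movXg)
    qed
    have movHr: "mov u \<subseteq> {0..1} - mov \<gamma>" if uH: "u \<in> Hr" for u
    proof -
      have uG: "u \<in> generate BG Xr" using uH Hr_def by simp
      show ?thesis by (rule gen_mov[OF Xrc _ uG]) (rule movXr)
    qed
    have powstab: "(\<gamma> [^]\<^bsub>BG\<^esub> n) ` mov \<gamma> \<subseteq> mov \<gamma>" for n :: int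
    proof (rule mov_image_commute[OF BGg.int_pow_closed[OF gc] gc])
      have e1: "\<gamma> [^]\<^bsub>BG\<^esub> (n + 1) = \<gamma> [^]\<^bsub>BG\<^esub> n \<otimes>\<^bsub>BG\<^esub> \<gamma> [^]\<^bsub>BG\<^esub> (1::int)"
        by (rule BGg.int_pow_mult[OF gc])
      have e2: "\<gamma> [^]\<^bsub>BG\<^esub> (1 + n) = \<gamma> [^]\<^bsub>BG\<^esub> (1::int) \<otimes>\<^bsub>BG\<^esub> \<gamma> [^]\<^bsub>BG\<^esub> n"
        by (rule BGg.int_pow_mult[OF gc])
      have e3: "\<gamma> [^]\<^bsub>BG\<^esub> (1::int) = \<gamma>" by (rule BGg.int_pow_1[OF gc])
      have "\<gamma> [^]\<^bsub>BG\<^esub> n \<otimes>\<^bsub>BG\<^esub> \<gamma> = \<gamma> [^]\<^bsub>BG\<^esub> (n + 1)" by (simp only: e1 e3)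
      also have "\<dots> = \<gamma> [^]\<^bsub>BG\<^esub> (1 + n)" by (simp only: add.commute)
      also have "\<dots> = \<gamma> \<otimes>\<^bsub>BG\<^esub> \<gamma> [^]\<^bsub>BG\<^esub> n" by (simp only: e2 e3)
      finally show "\<gamma> [^]\<^bsub>BG\<^esub> n \<otimes>\<^bsub>BG\<^esub> \<gamma> = \<gamma> \<otimes>\<^bsub>BG\<^esub> \<gamma> [^]\<^bsub>BG\<^esub> n" .
    qed
    have cC1: "\<gamma> \<otimes>\<^bsub>BG\<^esub> u = u \<otimes>\<^bsub>BG\<^esub> \<gamma>" if uX: "u \<in> generate BG Xr" for u
    proof (rule mov_commute[OF gc])
      have uH: "u \<in> Hr" using uX Hr_def by simp
      show "u \<in> carrier BG" using uH Hrc by blast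
      show "mov \<gamma> \<inter> mov u = {}" using movHr[OF uH] by blast
    qed
    have movcj: "mov (cj BG (\<gamma> [^]\<^bsub>BG\<^esub> n) b) \<subseteq> (\<gamma> [^]\<^bsub>BG\<^esub> n) ` W" if bH: "b \<in> Hg" for b and n :: int
    proof -
      have "mov (cj BG (\<gamma> [^]\<^bsub>BG\<^esub> n) b) \<subseteq> (\<gamma> [^]\<^bsub>BG\<^esub> n) ` mov b"
        by (rule mov_cj[OF BGg.int_pow_closed[OF gc] subsetD[OF Hgc bH]])
      then show ?thesis using movHg[OF bH] by blast
    qed
    have c1: "a \<otimes>\<^bsub>BG\<^esub> cj BG (\<gamma> [^]\<^bsub>BG\<^esub> (n::int)) b = cj BG (\<gamma> [^]\<^bsub>BG\<^esub> n) b \<otimes>\<^bsub>BG\<^esub> a"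
      if "a \<in> Hr" "b \<in> Hg" for a b n
    proof (rule mov_commute)
      show "a \<in> carrier BG" using that Hrc by blast
      show "cj BG (\<gamma> [^]\<^bsub>BG\<^esub> n) b \<in> carrier BG"
        using BGg.cj_closed[OF BGg.int_pow_closed[OF gc]] that Hgc by blast
      have "mov (cj BG (\<gamma> [^]\<^bsub>BG\<^esub> n) b) \<subseteq> mov \<gamma>"
        using movcj[OF that(2), of n] Wmov powstab[of n] by blast
      then show "mov a \<inter> mov (cj BG (\<gamma> [^]\<^bsub>BG\<^esub> n) b) = {}" using movHr[OF that(1)] by blast
    qed
    have c2: "cj BG (\<gamma> [^]\<^bsub>BG\<^esub> (n::int)) b \<otimes>\<^bsub>BG\<^esub> cj BG (\<gamma> [^]\<^bsub>BG\<^esub> m) b'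
        = cj BG (\<gamma> [^]\<^bsub>BG\<^esub> m) b' \<otimes>\<^bsub>BG\<^esub> cj BG (\<gamma> [^]\<^bsub>BG\<^esub> n) b"
      if "b \<in> Hg" "b' \<in> Hg" "n \<noteq> m" for b b' n m
    proof (rule mov_commute)
      show "cj BG (\<gamma> [^]\<^bsub>BG\<^esub> n) b \<in> carrier BG" "cj BG (\<gamma> [^]\<^bsub>BG\<^esub> m) b' \<in> carrier BG"
        using BGg.cj_closed[OF BGg.int_pow_closed[OF gc]] that Hgc by blast+
      show "mov (cj BG (\<gamma> [^]\<^bsub>BG\<^esub> n) b) \<inter> mov (cj BG (\<gamma> [^]\<^bsub>BG\<^esub> m) b') = {}"
        using movcj[OF that(1), of n] movcj[OF that(2), of m] pow_disj[OF gc posg W0 HW that(3)] by blast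
    qed
    have sHr: "subgroup Hr BG" using BGg.generate_is_subgroup[OF Xrc] Hr_def by simp
    have sHg: "subgroup Hg BG" using BGg.generate_is_subgroup[OF Xgc] Hg_def by simp
    let ?N = "generate BG (Hr \<union> (\<Union>n. cj BG (\<gamma> [^]\<^bsub>BG\<^esub> (n::int)) ` Hg))"
    let ?k = "card T"
    have D1: "derived BG (generate BG (gens S)) \<subseteq> ?N"
      using BGg.C1_alg[OF gc Xgc Xrc cC1] gensS Hr_def Hg_def by simp
    have D2: "(derived BG ^^ ?k) ?N \<subseteq> generate BG ((derived BG ^^ ?k) Hr \<union>
        (\<Union>n. cj BG (\<gamma> [^]\<^bsub>BG\<^esub> (n::int)) ` (derived BG ^^ ?k) Hg))"
      by (rule BGg.C2_iter[OF sHr sHg gc c1 c2])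
    have HrT: "Hr \<subseteq> generate BG (gens T)" using BGg.mono_generate[OF XT(2)] Hr_def by simp
    have HgT: "Hg \<subseteq> generate BG (gens T)" using BGg.mono_generate[OF XT(1)] Hg_def by simp
    have dHr: "(derived BG ^^ ?k) Hr \<subseteq> {\<one>\<^bsub>BG\<^esub>}" using BGg.mono_exp_of_derived[OF HrT, of ?k] IH by simp
    have dHg: "(derived BG ^^ ?k) Hg \<subseteq> {\<one>\<^bsub>BG\<^esub>}" using BGg.mono_exp_of_derived[OF HgT, of ?k] IH by simp
    have U1: "(derived BG ^^ ?k) Hr \<union> (\<Union>n. cj BG (\<gamma> [^]\<^bsub>BG\<^esub> (n::int)) ` (derived BG ^^ ?k) Hg) \<subseteq> {\<one>\<^bsub>BG\<^esub>}"
      using dHr dHg BGg.cj_one2[OF BGg.int_pow_closed[OF gc]] by blast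
    have "(derived BG ^^ card S) (generate BG (gens S)) = (derived BG ^^ ?k) (derived BG (generate BG (gens S)))"
      using cS by (simp add: funpow_swap1)
    also have "\<dots> \<subseteq> (derived BG ^^ ?k) ?N" using BGg.mono_exp_of_derived[OF D1] .
    also have "\<dots> \<subseteq> generate BG {\<one>\<^bsub>BG\<^esub>}" using D2 BGg.mono_generate[OF U1] by blast
    also have "\<dots> = {\<one>\<^bsub>BG\<^esub>}" by (rule BGg.generate_one)
    finally have sub: "(derived BG ^^ card S) (generate BG (gens S)) \<subseteq> {\<one>\<^bsub>BG\<^esub>}" .
    have "\<one>\<^bsub>BG\<^esub> \<in> (derived BG ^^ card S) (generate BG (gens S))"
      using subgroup.one_closed[OF BGg.exp_of_derived_is_subgroup[OF BGg.generate_is_subgroup[OF gens_carrier[OF less.prems(2)]]]] .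
    then show ?thesis using sub by blast
  qed
qed

theorem propositionp:
  fixes \<S> :: "((real \<Rightarrow> real) \<times> real set) set"
  assumes "finite \<S>" and "fundamental_system \<S>"
  shows "solvable (elementary_group \<S>) \<and>
         (\<exists>k \<le> card \<S>. (derived (elementary_group \<S>) ^^ k) (carrier (elementary_group \<S>))
                          = {\<one>\<^bsub>elementary_group \<S>\<^esub>})"
proof -
  let ?E = "elementary_group \<S>"
  let ?G = "generate BG (gens \<S>)"
  have E: "?E = BG\<lparr>carrier := ?G\<rparr>" unfolding elementary_group_def gens_def by simp
  have sG: "subgroup ?G BG" by (rule BGg.generate_is_subgroup[OF gens_carrier[OF assms(2)]])
  have eq: "(derived ?E ^^ k) (carrier ?E) = (derived BG ^^ k) ?G" for k
  proof (induction k)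
    case 0 then show ?case using E by simp
  next
    case (Suc k)
    have sub: "(derived BG ^^ k) ?G \<subseteq> ?G" using BGg.exp_derived_sub[OF sG] .
    have "(derived ?E ^^ Suc k) (carrier ?E) = derived ?E ((derived BG ^^ k) ?G)" using Suc by simp
    also have "\<dots> = derived BG ((derived BG ^^ k) ?G)"
      using BGg.derived_consistent[OF sub sG] E by simp
    finally show ?case by simp
  qed
  have one: "\<one>\<^bsub>?E\<^esub> = \<one>\<^bsub>BG\<^esub>" using E by simp
  have grpE: "group ?E" using BGg.subgroup_imp_group[OF sG] E by simp
  have triv: "(derived ?E ^^ card \<S>) (carrier ?E) = {\<one>\<^bsub>?E\<^esub>}"
    using eq main_ind[OF assms] one by simp
  show ?thesis using group.solvable_iff_trivial_derived_seq[OF grpE] triv by blast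
qed

end
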